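(* If there is no uncertainty, then there exist optimal priority and quota mechanisms.
   Context: A single authority allocates a measure $q\in(0,1)$ of a homogeneous resource to a continuum of agents. Each agent has a type $\theta=(s,m)\in\Theta=[0,1]\times\mathcal{M}$, consisting of a score $s\in[0,1]$ and a group $m$ in a finite set $\mathcal{M}$. In state $\omega$, the measure of types is $F_\omega$ with density $f_\omega$; the authority's belief over states is $\Lambda$. An allocation $\mu:\Theta\to\{0,1\}$ is feasible if it allocates at most measure $q$; a mechanism maps each state to a feasible allocation. The score index is $\bar s_h(\mu,\omega)=\int_\Theta \mu(s,m)h(s)\,dF_\omega(s,m)$ for a continuous, strictly increasing $h:[0,1]\to\mathbb{R}_+$, and the measure of group-$m$ agents allocated is $x_m(\mu,\omega)=\int_0^1\mu(s,m)f_\omega(s,m)\,ds$. The authority's utility is $\xi(\bar s_h,x)=g\big(\bar s_h+\sum_{m\in\mathcal{M}}u_m(x_m)\big)$ with $g$ continuous and strictly increasing and each $u_m$ differentiable and concave; the authority always prefers to allocate the entire resource. "No uncertainty" means $\Lambda$ is a Dirac measure on a single state, and a mechanism is optimal without uncertainty if it maximizes the authority's utility. A priority mechanism, induced by a priority policy $P:\Theta\to[0,1]$, allocates the resource in order of priorities $P(s,m)$ until measure $q$ is allocated, with ties broken uniformly at random. A quota mechanism, induced by $(Q,D)$ with $Q=\{Q_m\}_{m\in\mathcal{M}}$ reserving measure $Q_m$ for group $m$ (residual $Q_R=q-\sum_m Q_m$ open to all) and a bijection $D:\mathcal{M}\cup\{R\}\to\{1,\dots,|\mathcal{M}|+1\}$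 giving the processing order, allocates $Q_{D^{-1}(k)}$ to agents of group $D^{-1}(k)$ in ascending order of $k$ and in descending order of score within each $k$; if there are insufficiently many agents of a group to fill its quota, the residual capacity is allocated in a final round in which all agents are eligible. *)

theory Defs
  imports "HOL-Analysis.Analysis"
begin

text \<open>Single state (no uncertainty): the type distribution is given by a density
  f s m on [0,1] for each group m (groups form a finite type 'm).
  An allocation is a function mu s m; only its values on s in [0,1] matter.\<close>

definition group_mass :: "(real \<Rightarrow> 'm \<Rightarrow> real) \<Rightarrow> (real \<Rightarrow> 'm \<Rightarrow> real) \<Rightarrow> 'm \<Rightarrow> real" where
  "group_mass f mu m = (LINT s:{0..1}|lborel. mu s m * f s m)"

definition total_mass :: "(real \<Rightarrow> 'm::finite \<Rightarrow> real) \<Rightarrow> (real \<Rightarrow> 'm \<Rightarrow> real) \<Rightarrow> real" where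
  "total_mass f mu = (\<Sum>m\<in>UNIV. group_mass f mu m)"

definition score_index :: "(real \<Rightarrow> real) \<Rightarrow> (real \<Rightarrow> 'm::finite \<Rightarrow> real) \<Rightarrow> (real \<Rightarrow> 'm \<Rightarrow> real) \<Rightarrow> real" where
  "score_index h f mu = (\<Sum>m\<in>UNIV. LINT s:{0..1}|lborel. mu s m * h s * f s m)"

definition utility :: "(real \<Rightarrow> real) \<Rightarrow> (real \<Rightarrow> real) \<Rightarrow> ('m::finite \<Rightarrow> real \<Rightarrow> real)
    \<Rightarrow> (real \<Rightarrow> 'm \<Rightarrow> real) \<Rightarrow> (real \<Rightarrow> 'm \<Rightarrow> real) \<Rightarrow> real" where
  "utility g h u f mu = g (score_index h f mu + (\<Sum>m\<in>UNIV. u m (group_mass f mu m)))"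

definition is_allocation :: "(real \<Rightarrow> 'm \<Rightarrow> real) \<Rightarrow> bool" where
  "is_allocation mu \<longleftrightarrow> (\<forall>s m. mu s m \<in> {0,1}) \<and> (\<forall>m. (\<lambda>s. mu s m) \<in> borel_measurable borel)"

definition feasible :: "(real \<Rightarrow> 'm::finite \<Rightarrow> real) \<Rightarrow> real \<Rightarrow> (real \<Rightarrow> 'm \<Rightarrow> real) \<Rightarrow> bool" where
  "feasible f q mu \<longleftrightarrow> is_allocation mu \<and> total_mass f mu \<le> q"

text \<open>Outcome of a mechanism in the (single) state is optimal: it is a (possibly
  fractional, i.e. expected, for random tie-breaking) feasible outcome whose utility is at
  least that of every feasible allocation.\<close>
definition optimal_outcome :: "(real \<Rightarrow> real) \<Rightarrow> (real \<Rightarrow> real) \<Rightarrow> ('m::finite \<Rightarrow> real \<Rightarrow> real)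
    \<Rightarrow> (real \<Rightarrow> 'm \<Rightarrow> real) \<Rightarrow> real \<Rightarrow> (real \<Rightarrow> 'm \<Rightarrow> real) \<Rightarrow> bool" where
  "optimal_outcome g h u f q mu \<longleftrightarrow>
     (\<forall>s m. 0 \<le> mu s m \<and> mu s m \<le> 1) \<and> (\<forall>m. (\<lambda>s. mu s m) \<in> borel_measurable borel) \<and>
     total_mass f mu \<le> q \<and>
     (\<forall>nu. feasible f q nu \<longrightarrow> utility g h u f nu \<le> utility g h u f mu)"

text \<open>Priority mechanism induced by P: agents with priority above a cutoff p are
  allocated, agents with priority exactly p receive the same fraction alpha (the
  probability under uniform random tie-breaking), until measure min(q, total) is allocated.\<close>
definition priority_outcome :: "(real \<Rightarrow> 'm::finite \<Rightarrow> real) \<Rightarrow> real \<Rightarrow> (real \<Rightarrow> 'm \<Rightarrow> real)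
    \<Rightarrow> (real \<Rightarrow> 'm \<Rightarrow> real) \<Rightarrow> bool" where
  "priority_outcome f q P mu \<longleftrightarrow>
     (\<exists>p alpha. 0 \<le> alpha \<and> alpha \<le> 1 \<and>
        (\<forall>s m. mu s m = (if p < P s m then 1 else if P s m = p then alpha else 0))) \<and>
     (\<forall>m. (\<lambda>s. mu s m) \<in> borel_measurable borel) \<and>
     total_mass f mu = min q (total_mass f (\<lambda>s m. 1))"

definition is_priority_policy :: "(real \<Rightarrow> 'm \<Rightarrow> real) \<Rightarrow> bool" where
  "is_priority_policy P \<longleftrightarrow> (\<forall>s m. 0 \<le> P s m \<and> P s m \<le> 1)"

text \<open>Quota mechanisms. The residual quota R is represented by None.\<close>
definition eligible :: "'m option \<Rightarrow> 'm set" where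
  "eligible k = (case k of None \<Rightarrow> UNIV | Some m \<Rightarrow> {m})"

definition quota_of :: "('m::finite \<Rightarrow> real) \<Rightarrow> real \<Rightarrow> 'm option \<Rightarrow> real" where
  "quota_of Q q k = (case k of None \<Rightarrow> q - (\<Sum>m\<in>UNIV. Q m) | Some m \<Rightarrow> Q m)"

definition is_quota_policy :: "('m::finite \<Rightarrow> real) \<Rightarrow> real \<Rightarrow> ('m option \<Rightarrow> nat) \<Rightarrow> bool" where
  "is_quota_policy Q q D \<longleftrightarrow> (\<forall>m. 0 \<le> Q m) \<and> (\<Sum>m\<in>UNIV. Q m) \<le> q \<and>
     bij_betw D UNIV {1..CARD('m) + 1}"

text \<open>One round: capacity c is allocated to not-yet-allocated agents whose group is in E,
  in descending order of score (i.e. above a score cutoff t), until c is used up or no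
  eligible agents remain.\<close>
definition round_step :: "(real \<Rightarrow> 'm::finite \<Rightarrow> real) \<Rightarrow> 'm set \<Rightarrow> real
    \<Rightarrow> (real \<Rightarrow> 'm \<Rightarrow> real) \<Rightarrow> (real \<Rightarrow> 'm \<Rightarrow> real) \<Rightarrow> bool" where
  "round_step f E c mu0 mu1 \<longleftrightarrow>
     (\<exists>t. \<forall>s m. mu1 s m = (if m \<in> E \<and> t < s then 1 else mu0 s m)) \<and>
     total_mass f mu1 - total_mass f mu0 =
       min c (total_mass f (\<lambda>s m. if m \<in> E then 1 - mu0 s m else 0))"

definition quota_outcome :: "(real \<Rightarrow> 'm::finite \<Rightarrow> real) \<Rightarrow> real \<Rightarrow> ('m \<Rightarrow> real)
    \<Rightarrow> ('m option \<Rightarrow> nat) \<Rightarrow> (real \<Rightarrow> 'm \<Rightarrow> real) \<Rightarrow> bool" where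
  "quota_outcome f q Q D mu \<longleftrightarrow>
     (\<exists>nu :: nat \<Rightarrow> real \<Rightarrow> 'm \<Rightarrow> real.
        nu 0 = (\<lambda>s m. 0) \<and>
        (\<forall>k\<in>{1..CARD('m) + 1}.
           round_step f (eligible (inv D k)) (quota_of Q q (inv D k)) (nu (k - 1)) (nu k)) \<and>
        round_step f UNIV (q - total_mass f (nu (CARD('m) + 1))) (nu (CARD('m) + 1)) mu)"

end

theory Submission imports Defs begin

definition cutI :: "(real \<Rightarrow> real) \<Rightarrow> real \<Rightarrow> real" where
  "cutI g t = (LINT s:{0..1}|lborel. (if t < s then 1 else 0) * g s)"

lemma sint_bound:
  fixes g k :: "real \<Rightarrow> real"
  assumes g: "set_integrable lborel {0..1} g"
    and k: "(\<lambda>s. indicator {0..1} s * k s) \<in> borel_measurable borel"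
    and B: "\<And>s. s \<in> {0..1} \<Longrightarrow> \<bar>k s\<bar> \<le> B"
  shows "set_integrable lborel {0..1} (\<lambda>s. k s * g s)"
proof -
  have B0: "0 \<le> B" using B[of 0] by auto
  have gi: "integrable lborel (\<lambda>s. indicator {0..1} s * g s)"
    using g unfolding set_integrable_def by simp
  have m1: "(\<lambda>s. indicator {0..1} s * g s) \<in> borel_measurable lborel"
    using gi by auto
  have eq: "(\<lambda>s. indicator {0..1} s *\<^sub>R (k s * g s)) = (\<lambda>s. (indicator {0..1} s * k s) * (indicator {0..1} s * g s))"
    by (auto simp: indicator_def fun_eq_iff)
  show ?thesis unfolding set_integrable_def eq
  proof (rule Bochner_Integration.integrable_bound[where f="\<lambda>s. B * (indicator {0..1} s * g s)"])
    show "integrable lborel (\<lambda>s. B * (indicator {0..1} s * g s))" using gi by simp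
    show "(\<lambda>s. indicator {0..1} s * k s * (indicator {0..1} s * g s)) \<in> borel_measurable lborel"
      using k m1 by (simp add: measurable_lborel1)
    show "AE x in lborel. norm (indicator {0..1} x * k x * (indicator {0..1} x * g x)) \<le> norm (B * (indicator {0..1} x * g x))"
      using B B0 by (auto simp: indicator_def abs_mult intro!: mult_right_mono)
  qed
qed

lemma cutI_eq:
  assumes g: "set_integrable lborel {0..1} g" and t: "0 \<le> t" "t \<le> 1"
  shows "cutI g t = (LINT s:{0..1}|lborel. g s) - (LINT s:{0..t}|lborel. g s)"
proof -
  have g2: "set_integrable lborel {0..t} g"
    by (rule set_integrable_subset[OF g]) (use t in auto)
  have eq: "(\<lambda>s. indicator {0..1} s *\<^sub>R ((if t < s then 1 else 0) * g s)) =
     (\<lambda>s. indicator {0..1} s *\<^sub>R g s - indicator {0..t} s *\<^sub>R g s)"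
    using t by (auto simp: indicator_def fun_eq_iff)
  show ?thesis unfolding cutI_def set_lebesgue_integral_def eq
    by (rule Bochner_Integration.integral_diff)
      (use g g2 in \<open>auto simp: set_integrable_def\<close>)
qed

lemma cutI_cont:
  assumes g: "set_integrable lborel {0..1} g"
  shows "continuous_on {0..1} (cutI g)"
proof -
  have hk: "g integrable_on {0..1}" using set_borel_integral_eq_integral(1)[OF g] .
  have c: "continuous_on {0..1} (\<lambda>x. integral {0..x} g)"
    by (rule indefinite_integral_continuous_1[OF hk])
  have c2: "continuous_on {0..1} (\<lambda>t. (LINT s:{0..1}|lborel. g s) - integral {0..t} g)"
    by (rule continuous_on_diff[OF continuous_on_const c])
  have eq: "cutI g t = (LINT s:{0..1}|lborel. g s) - integral {0..t} g" if t: "t \<in> {0..1}" for t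
  proof -
    have g2: "set_integrable lborel {0..t} g"
      by (rule set_integrable_subset[OF g]) (use t in auto)
    have "cutI g t = (LINT s:{0..1}|lborel. g s) - (LINT s:{0..t}|lborel. g s)"
      using cutI_eq[OF g] t by simp
    also have "(LINT s:{0..t}|lborel. g s) = integral {0..t} g"
      by (rule set_borel_integral_eq_integral(2)[OF g2])
    finally show ?thesis .
  qed
  show ?thesis
    by (rule continuous_on_cong[THEN iffD2, OF refl _ c2]) (simp add: eq)
qed

lemma cutI_0:
  assumes g: "set_integrable lborel {0..1} g"
  shows "cutI g 0 = (LINT s:{0..1}|lborel. g s)"
proof -
  have g2: "set_integrable lborel {0..0} g"
    by (rule set_integrable_subset[OF g]) auto
  show ?thesis using cutI_eq[OF g] set_borel_integral_eq_integral(2)[OF g2] by simp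
qed

lemma cutI_1:
  assumes g: "set_integrable lborel {0..1} g"
  shows "cutI g 1 = 0"
  using cutI_eq[OF g] by simp

lemma cutI_le:
  assumes g: "set_integrable lborel {0..1} g" and gn: "\<And>s. s \<in> {0..1} \<Longrightarrow> 0 \<le> g s"
    and t: "0 \<le> t" "t \<le> 1"
  shows "cutI g t \<le> (LINT s:{0..1}|lborel. g s)" "0 \<le> cutI g t"
proof -
  have "0 \<le> (LINT s:{0..t}|lborel. g s)" unfolding set_lebesgue_integral_def
    by (rule Bochner_Integration.integral_nonneg) (use gn t in \<open>simp add: indicator_def\<close>)
  then show "cutI g t \<le> (LINT s:{0..1}|lborel. g s)" using cutI_eq[OF g t] by simp
  show "0 \<le> cutI g t" unfolding cutI_def set_lebesgue_integral_def
    by (rule Bochner_Integration.integral_nonneg) (use gn in \<open>simp add: indicator_def\<close>)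
qed

lemma meas_ind_cut: "(\<lambda>s::real. indicator {0..1} s * (if t < s then 1 else (0::real))) \<in> borel_measurable borel"
  by measurable

lemma sint_cut:
  fixes t :: real and g :: "real \<Rightarrow> real"
  assumes g: "set_integrable lborel {0..1} g"
  shows "set_integrable lborel {0..1} (\<lambda>s. (if t < s then 1 else 0) * g s)"
  by (rule sint_bound[where k="\<lambda>s. if t < s then 1 else 0" and B=1, OF g meas_ind_cut]) auto

lemma sint_nu:
  fixes nu g :: "real \<Rightarrow> real"
  assumes g: "set_integrable lborel {0..1} g" and nu: "nu \<in> borel_measurable borel"
    and b: "\<And>s. 0 \<le> nu s \<and> nu s \<le> 1"
  shows "set_integrable lborel {0..1} (\<lambda>s. nu s * g s)"
proof (rule sint_bound[where k=nu and B=1, OF g])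
  show "(\<lambda>s. indicator {0..1} s * nu s) \<in> borel_measurable borel"
    using nu by measurable
  show "\<And>s. s \<in> {0..1} \<Longrightarrow> \<bar>nu s\<bar> \<le> 1" using b by (metis abs_of_nonneg)
qed

lemma sint_h:
  fixes h nu g :: "real \<Rightarrow> real"
  assumes g: "set_integrable lborel {0..1} g" and nu: "nu \<in> borel_measurable borel"
    and b: "\<And>s. 0 \<le> nu s \<and> nu s \<le> 1"
    and hc: "continuous_on {0..1} h" and hm: "strict_mono_on {0..1} h"
    and hn: "\<And>s. s \<in> {0..1} \<Longrightarrow> 0 \<le> h s"
  shows "set_integrable lborel {0..1} (\<lambda>s. nu s * h s * g s)"
proof (rule sint_bound[where k="\<lambda>s. nu s * h s" and B="h 1", OF g])
  have "(\<lambda>s. indicator {0..1} s *\<^sub>R h s) \<in> borel_measurable borel"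
    by (rule borel_measurable_continuous_on_indicator[OF _ hc]) auto
  then have "(\<lambda>s. nu s * (indicator {0..1} s * h s)) \<in> borel_measurable borel"
    using nu by simp
  then show "(\<lambda>s. indicator {0..1} s * (nu s * h s)) \<in> borel_measurable borel"
    by (simp add: mult_ac)
  fix s :: real assume s: "s \<in> {0..1}"
  have "h s \<le> h 1" using strict_mono_on_leD[OF hm s] s by auto
  then have "nu s * h s \<le> h 1" using b[of s] hn[OF s]
    by (meson dual_order.trans mult_left_le_one_le)
  moreover have "0 \<le> nu s * h s" using b[of s] hn[OF s] by simp
  ultimately show "\<bar>nu s * h s\<bar> \<le> h 1" by simp
qed

lemma bathtub:
  fixes h f nu :: "real \<Rightarrow> real"
  assumes g: "set_integrable lborel {0..1} f" and fn: "\<And>s. s \<in> {0..1} \<Longrightarrow> 0 \<le> f s"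
    and nu: "nu \<in> borel_measurable borel"
    and b: "\<And>s. 0 \<le> nu s \<and> nu s \<le> 1"
    and hc: "continuous_on {0..1} h" and hm: "strict_mono_on {0..1} h"
    and hn: "\<And>s. s \<in> {0..1} \<Longrightarrow> 0 \<le> h s"
    and t: "0 \<le> t" "t \<le> 1"
    and eq: "(LINT s:{0..1}|lborel. nu s * f s) = cutI f t"
  shows "(LINT s:{0..1}|lborel. nu s * h s * f s) \<le> cutI (\<lambda>s. h s * f s) t"
proof -
  have i1: "set_integrable lborel {0..1} (\<lambda>s. nu s * h s * f s)"
    by (rule sint_h[OF g nu b hc hm hn])
  have hf: "set_integrable lborel {0..1} (\<lambda>s. 1 * h s * f s)"
    by (rule sint_h[OF g _ _ hc hm hn]) auto
  have i2: "set_integrable lborel {0..1} (\<lambda>s. (if t < s then 1 else 0) * (h s * f s))"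
    by (rule sint_cut) (use hf in simp)
  have i3: "set_integrable lborel {0..1} (\<lambda>s. nu s * f s)" by (rule sint_nu[OF g nu b])
  have i4: "set_integrable lborel {0..1} (\<lambda>s. (if t < s then 1 else 0) * f s)" by (rule sint_cut[OF g])
  have i5: "set_integrable lborel {0..1} (\<lambda>s. h t * (nu s * f s - (if t < s then 1 else 0) * f s))"
    using i3 i4 by auto
  have "(LINT s:{0..1}|lborel. nu s * h s * f s) \<le>
     (LINT s:{0..1}|lborel. (if t < s then 1 else 0) * (h s * f s) + h t * (nu s * f s - (if t < s then 1 else 0) * f s))"
  proof (rule set_integral_mono[OF i1])
    show "set_integrable lborel {0..1} (\<lambda>s. (if t < s then 1 else 0) * (h s * f s) + h t * (nu s * f s - (if t < s then 1 else 0) * f s))"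
      using i2 i5 by auto
    fix s :: real assume s: "s \<in> {0..1}"
    have ts: "t \<in> {0..1}" using t by auto
    show "nu s * h s * f s \<le> (if t < s then 1 else 0) * (h s * f s) + h t * (nu s * f s - (if t < s then 1 else 0) * f s)"
    proof (cases "t < s")
      case True
      have "h t \<le> h s" using strict_mono_on_leD[OF hm ts s] True by auto
      then have "0 \<le> (1 - nu s) * (h s - h t) * f s" using b[of s] fn[OF s] by auto
      then show ?thesis using True by (simp add: algebra_simps)
    next
      case False
      have "h s \<le> h t" using strict_mono_on_leD[OF hm s ts] False by auto
      then have "0 \<le> nu s * (h t - h s) * f s" using b[of s] fn[OF s] by auto
      then show ?thesis using False by (simp add: algebra_simps)
    qed
  qed
  also have "\<dots> = cutI (\<lambda>s. h s * f s) t + h t * ((LINT s:{0..1}|lborel. nu s * f s) - cutI f t)"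
    using i2 i3 i4 i5 by (simp add: cutI_def set_integral_add set_integral_diff)
  also have "\<dots> = cutI (\<lambda>s. h s * f s) t" using eq by simp
  finally show ?thesis .
qed

theorem proposition4:
  fixes f :: "real \<Rightarrow> 'm::finite \<Rightarrow> real"
    and q :: real
    and h :: "real \<Rightarrow> real"
    and g :: "real \<Rightarrow> real"
    and u :: "'m \<Rightarrow> real \<Rightarrow> real"
  assumes q: "0 < q" "q < 1"
    and f_nonneg: "\<And>s m. s \<in> {0..1} \<Longrightarrow> 0 \<le> f s m"
    and f_int: "\<And>m. set_integrable lborel {0..1} (\<lambda>s. f s m)"
    and h_cont: "continuous_on {0..1} h"
    and h_mono: "strict_mono_on {0..1} h"
    and h_nonneg: "\<And>s. s \<in> {0..1} \<Longrightarrow> 0 \<le> h s"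
    and g_cont: "continuous_on UNIV g"
    and g_mono: "strict_mono g"
    and u_diff: "\<And>m x. u m differentiable (at x)"
    and u_concave: "\<And>m. concave_on UNIV (u m)"
    and prefers_full: "\<And>mu nu. feasible f q mu \<Longrightarrow> feasible f q nu \<Longrightarrow>
                         (\<forall>s m. mu s m \<le> nu s m) \<Longrightarrow> utility g h u f mu \<le> utility g h u f nu"
  shows "(\<exists>P mu. is_priority_policy P \<and> priority_outcome f q P mu \<and> optimal_outcome g h u f q mu)
       \<and> (\<exists>Q D mu. is_quota_policy Q q D \<and> quota_outcome f q Q D mu \<and> optimal_outcome g h u f q mu)"
proof -
  have hfi: "set_integrable lborel {0..1} (\<lambda>s. h s * f s m)" for m
    using sint_h[OF f_int _ _ h_cont h_mono h_nonneg, of "\<lambda>_. 1"] by simp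
  define Tm where "Tm m = (LINT s:{0..1}|lborel. f s m)" for m
  define I where "I m = cutI (\<lambda>s. f s m)" for m
  define J where "J m = cutI (\<lambda>s. h s * f s m)" for m
  define ind where "ind t = (\<lambda>s m. if t $ m < s then 1 else (0::real))" for t :: "real^'m"
  define Tot where "Tot t = (\<Sum>m\<in>UNIV. I m (t$m))" for t :: "real^'m"
  define Phi where "Phi t = (\<Sum>m\<in>UNIV. J m (t$m) + u m (I m (t$m)))" for t :: "real^'m"
  define C where "C = cbox (vec 0) (vec 1 :: real^'m)"
  define K where "K = {t \<in> C. Tot t \<le> q}"
  define Total where "Total = total_mass f (\<lambda>s m. 1)"
  have Icont: "continuous_on {0..1} (I m)" for m
    unfolding I_def by (rule cutI_cont[OF f_int])
  have Jcont: "continuous_on {0..1} (J m)" for m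
    unfolding J_def by (rule cutI_cont[OF hfi])
  have I0: "I m 0 = Tm m" for m unfolding I_def Tm_def by (rule cutI_0[OF f_int])
  have I1: "I m 1 = 0" for m unfolding I_def by (rule cutI_1[OF f_int])
  have Ile: "0 \<le> I m t" "I m t \<le> Tm m" if "0 \<le> t" "t \<le> 1" for m t
    using cutI_le[OF f_int _ that, of m] f_nonneg unfolding I_def Tm_def by auto
  have Total_eq: "Total = (\<Sum>m\<in>UNIV. Tm m)"
    unfolding Total_def total_mass_def group_mass_def Tm_def by simp
  have gm_ind: "group_mass f (ind t) m = I m (t$m)" for t m
    by (simp add: group_mass_def ind_def I_def cutI_def)
  have tm_ind: "total_mass f (ind t) = Tot t" for t
    by (simp add: total_mass_def gm_ind Tot_def)
  have si_ind: "score_index h f (ind t) = (\<Sum>m\<in>UNIV. J m (t$m))" for t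
    by (simp add: score_index_def ind_def J_def cutI_def mult.assoc)
  have util_ind: "utility g h u f (ind t) = g (Phi t)" for t
    by (simp add: utility_def si_ind gm_ind Phi_def sum.distrib)
  have ind_meas: "(\<lambda>s. ind t s m) \<in> borel_measurable borel" for t m
    unfolding ind_def by measurable
  have ind_alloc: "is_allocation (ind t)" for t
    unfolding is_allocation_def using ind_meas by (auto simp: ind_def)
  have C_mem: "t \<in> C \<longleftrightarrow> (\<forall>m. 0 \<le> t$m \<and> t$m \<le> 1)" for t
    by (simp add: C_def mem_box_cart)
  have compC: "compact C" unfolding C_def by (rule compact_cbox)
  have comp_cont: "continuous_on C (\<lambda>t. F (t$m))" if "continuous_on {0..1} F" for F :: "real \<Rightarrow> real" and m
    by (rule continuous_on_compose2[OF that linear_continuous_on[OF bounded_linear_vec_nth]])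
       (auto simp: C_mem)
  have u_cont: "continuous_on UNIV (u m)" for m
    by (rule continuous_at_imp_continuous_on)
       (use u_diff differentiable_imp_continuous_within in blast)
  have contTot: "continuous_on C Tot"
    unfolding Tot_def by (intro continuous_on_sum comp_cont Icont)
  have contU: "continuous_on C (\<lambda>t. u m (I m (t $ m)))" for m
    by (rule continuous_on_compose2[OF u_cont[of m] comp_cont[OF Icont]]) auto
  have contPhi: "continuous_on C Phi"
    unfolding Phi_def by (intro continuous_on_sum continuous_on_add comp_cont[OF Jcont] contU)
  have compK: "compact K"
  proof -
    have "closed {t \<in> C. Tot t \<le> (\<lambda>_. q) t}"
      by (rule continuous_on_closed_Collect_le[OF contTot continuous_on_const])
         (use compC compact_imp_closed in blast)
    then have "closed K" unfolding K_def by simp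
    moreover have "K \<subseteq> C" unfolding K_def by auto
    ultimately show ?thesis using compC
      by (metis compact_Int_closed inf.absorb_iff2)
  qed
  have vec1K: "vec 1 \<in> K"
    unfolding K_def Tot_def using q by (simp add: C_mem I1)
  obtain ts where tsK: "ts \<in> K" and tsmax: "\<And>t. t \<in> K \<Longrightarrow> Phi t \<le> Phi ts"
    using continuous_attains_sup[OF compK _ continuous_on_subset[OF contPhi]] vec1K
    unfolding K_def by blast
  have tsC: "0 \<le> ts$m \<and> ts$m \<le> 1" for m using tsK unfolding K_def C_mem by auto
  have tsq: "Tot ts \<le> q" using tsK unfolding K_def by auto
  have opt_ts: "utility g h u f nu \<le> utility g h u f (ind ts)" if nu: "feasible f q nu" for nu
  proof -
    have nu01': "\<forall>s m. nu s m = 0 \<or> nu s m = 1" and numeas: "\<And>m. (\<lambda>s. nu s m) \<in> borel_measurable borel"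
      and nuq: "total_mass f nu \<le> q"
      using nu unfolding feasible_def is_allocation_def by auto
    have nu01: "0 \<le> nu s m \<and> nu s m \<le> 1" for s m using nu01'[rule_format, of s m] by auto
    have "\<exists>\<tau>. 0 \<le> \<tau> \<and> \<tau> \<le> 1 \<and> I m \<tau> = group_mass f nu m" for m
    proof -
      have gi: "set_integrable lborel {0..1} (\<lambda>s. nu s m * f s m)"
        by (rule sint_nu[OF f_int numeas]) (use nu01 in auto)
      have "0 \<le> group_mass f nu m" unfolding group_mass_def set_lebesgue_integral_def
        by (rule Bochner_Integration.integral_nonneg) (use nu01 f_nonneg in \<open>simp add: indicator_def\<close>)
      moreover have "group_mass f nu m \<le> Tm m" unfolding group_mass_def Tm_def
        by (rule set_integral_mono[OF gi f_int]) (use nu01 f_nonneg in \<open>simp add: mult_left_le_one_le\<close>)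
      ultimately show ?thesis
        using IVT2'[of "I m" 1 "group_mass f nu m" 0] Icont[of m] I0 I1 by auto
    qed
    then obtain \<tau> where tau: "\<And>m. 0 \<le> \<tau> m \<and> \<tau> m \<le> 1 \<and> I m (\<tau> m) = group_mass f nu m"
      by metis
    define t where "t = (\<chi> m. \<tau> m)"
    have tK: "t \<in> K" unfolding K_def C_mem Tot_def t_def
      using tau nuq by (simp add: total_mass_def)
    have sc: "score_index h f nu \<le> (\<Sum>m\<in>UNIV. J m (t$m))"
      unfolding score_index_def
    proof (rule sum_mono)
      fix m
      show "(LINT s:{0..1}|lborel. nu s m * h s * f s m) \<le> J m (t $ m)"
        unfolding J_def t_def
        by (rule bathtub[OF f_int f_nonneg numeas _ h_cont h_mono h_nonneg])
           (use tau nu01 in \<open>auto simp: group_mass_def I_def\<close>)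
    qed
    have "score_index h f nu + (\<Sum>m\<in>UNIV. u m (group_mass f nu m)) \<le> Phi t"
      using sc tau unfolding Phi_def t_def by (simp add: sum.distrib)
    also have "\<dots> \<le> Phi ts" by (rule tsmax[OF tK])
    finally show ?thesis unfolding utility_def
      using util_ind[of ts] g_mono by (simp add: utility_def strict_mono_less_eq)
  qed
  define p where "p l = (\<chi> m. (1 - l) * ts$m)" for l :: real
  have p_mem: "0 \<le> p l $ m \<and> p l $ m \<le> 1" if "0 \<le> l" "l \<le> 1" for l m
    using tsC[of m] that unfolding p_def by (auto simp: mult_le_one)
  have contp: "continuous_on {0..1} (\<lambda>l. Tot (p l))"
    unfolding Tot_def p_def
  proof (intro continuous_on_sum)
    fix m
    show "continuous_on {0..1} (\<lambda>l. I m ((\<chi> m. (1 - l) * ts $ m) $ m))"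
      by (simp, rule continuous_on_compose2[OF Icont[of m]])
         (auto intro!: continuous_intros simp: mult_le_one tsC)
  qed
  have p0: "Tot (p 0) = Tot ts" unfolding p_def by simp
  have p1: "Tot (p 1) = Total" unfolding p_def Tot_def Total_eq by (simp add: I0)
  obtain l where l: "0 \<le> l" "l \<le> 1" "Tot (p l) = min q Total"
  proof (cases "Total \<le> q")
    case True then show ?thesis using that[of 1] p1 by auto
  next
    case False
    then show ?thesis using IVT'[of "\<lambda>l. Tot (p l)" 0 q 1] contp p0 tsq p1 that by auto
  qed
  define t2 where "t2 = p l"
  have t2C: "0 \<le> t2$m \<and> t2$m \<le> 1" for m unfolding t2_def using p_mem l by auto
  have t2le: "t2$m \<le> ts$m" for m unfolding t2_def p_def using tsC[of m] l
    by (simp add: mult_le_cancel_right1 mult_left_le_one_le)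
  define mu where "mu = ind t2"
  have mu_mass: "total_mass f mu = min q Total" unfolding mu_def t2_def tm_ind using l by simp
  have Total_nn: "0 \<le> Tm m" for m using Ile[of 0 m] by simp
  have feas_mu: "feasible f q mu" unfolding feasible_def mu_def using ind_alloc mu_mass tm_ind
    by (simp add: mu_def)
  have feas_ts: "feasible f q (ind ts)" unfolding feasible_def using ind_alloc tm_ind tsq by simp
  have mono_mu: "\<forall>s m. ind ts s m \<le> mu s m" unfolding mu_def ind_def
    using t2le by (auto simp: not_less) (meson less_le_trans not_le t2le)
  have opt_mu: "optimal_outcome g h u f q mu"
    unfolding optimal_outcome_def
  proof (intro conjI allI impI)
    fix s m show "0 \<le> mu s m" "mu s m \<le> 1" unfolding mu_def ind_def by auto
  next
    fix m show "(\<lambda>s. mu s m) \<in> borel_measurable borel" unfolding mu_def by (rule ind_meas)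
  next
    show "total_mass f mu \<le> q" using mu_mass by simp
  next
    fix nu assume "feasible f q nu"
    then show "utility g h u f nu \<le> utility g h u f mu"
      using opt_ts prefers_full[OF feas_ts feas_mu mono_mu] by (meson order_trans)
  qed
  have prio: "\<exists>P mu. is_priority_policy P \<and> priority_outcome f q P mu \<and> optimal_outcome g h u f q mu"
  proof (intro exI conjI)
    show "is_priority_policy mu" unfolding is_priority_policy_def mu_def ind_def by auto
    show "priority_outcome f q mu mu"
      unfolding priority_outcome_def
    proof (intro conjI allI)
      show "\<exists>p alpha. 0 \<le> alpha \<and> alpha \<le> 1 \<and>
        (\<forall>s m. mu s m = (if p < mu s m then 1 else if mu s m = p then alpha else 0))"
        by (rule exI[of _ "1/2"], rule exI[of _ 0]) (auto simp: mu_def ind_def)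
      show "(\<lambda>s. mu s m) \<in> borel_measurable borel" for m unfolding mu_def by (rule ind_meas)
      show "total_mass f mu = min q (total_mass f (\<lambda>s m. 1))" using mu_mass Total_def by simp
    qed
    show "optimal_outcome g h u f q mu" by (rule opt_mu)
  qed
  obtain e0 :: "'m \<Rightarrow> nat" where e0: "bij_betw e0 UNIV {0..<CARD('m)}"
    using ex_bij_betw_finite_nat[of "UNIV :: 'm set"] by auto
  define e where "e m = Suc (e0 m)" for m
  have e_inj: "e a = e b \<Longrightarrow> a = b" for a b
    using e0 unfolding e_def bij_betw_def inj_on_def by auto
  have e_range: "1 \<le> e m \<and> e m \<le> CARD('m)" for m
  proof -
    have "e0 m \<in> {0..<CARD('m)}" using e0 unfolding bij_betw_def by blast
    then show ?thesis unfolding e_def by simp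
  qed
  have e_surj: "\<exists>m. e m = k" if "1 \<le> k" "k \<le> CARD('m)" for k
  proof -
    have "k - 1 \<in> e0 ` UNIV" using e0 that unfolding bij_betw_def by auto
    then obtain m where "e0 m = k - 1" by auto
    then show ?thesis using that unfolding e_def by (intro exI[of _ m]) auto
  qed
  define D where "D x = (case x of None \<Rightarrow> CARD('m) + 1 | Some m \<Rightarrow> e m)" for x
  have D_inj: "inj D"
  proof (rule injI)
    fix x y assume "D x = D y"
    then show "x = y" unfolding D_def using e_range e_inj
      by (cases x; cases y) (auto, metis Suc_n_not_le_n, metis Suc_n_not_le_n)
  qed
  have D_bij: "bij_betw D UNIV {1..CARD('m)+1}"
    unfolding bij_betw_def
  proof
    show "inj_on D UNIV" using D_inj by simp
    show "range D = {1..CARD('m) + 1}"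
    proof
      show "range D \<subseteq> {1..CARD('m) + 1}" unfolding D_def using e_range
        by (auto split: option.splits) (metis le_SucI)
      show "{1..CARD('m) + 1} \<subseteq> range D"
      proof
        fix k assume k: "k \<in> {1..CARD('m) + 1}"
        show "k \<in> range D"
        proof (cases "k = CARD('m) + 1")
          case True then show ?thesis unfolding D_def by (intro range_eqI[of _ _ None]) simp
        next
          case False
          then obtain m where "e m = k" using e_surj k by fastforce
          then show ?thesis unfolding D_def by (intro range_eqI[of _ _ "Some m"]) simp
        qed
      qed
    qed
  qed
  define Q where "Q m = I m (t2$m)" for m
  have sumQ: "(\<Sum>m\<in>UNIV. Q m) = min q Total"
    using mu_mass tm_ind[of t2] unfolding mu_def Q_def Tot_def by simp
  have quota_pol: "is_quota_policy Q q D"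
    unfolding is_quota_policy_def using Ile t2C sumQ D_bij by (auto simp: Q_def)
  define nu where "nu k = (\<lambda>s m. if e m \<le> k \<and> t2$m < s then 1 else (0::real))" for k
  have gm_nu: "group_mass f (nu k) m = (if e m \<le> k then Q m else 0)" for k m
    by (cases "e m \<le> k") (simp_all add: group_mass_def nu_def Q_def I_def cutI_def)
  have tm_nu: "total_mass f (nu k) = (\<Sum>m\<in>UNIV. if e m \<le> k then Q m else 0)" for k
    by (simp add: total_mass_def gm_nu)
  have nu_last: "nu k = mu" if "CARD('m) \<le> k" for k
    unfolding nu_def mu_def ind_def using e_range that by (auto simp: fun_eq_iff intro: le_trans)
  have round_R: "round_step f UNIV (q - min q Total) mu mu"
    unfolding round_step_def
  proof (intro conjI)
    show "\<exists>t. \<forall>s m. mu s m = (if m \<in> UNIV \<and> t < s then 1 else mu s m)"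
      by (rule exI[of _ 1]) (use t2C in \<open>auto simp: mu_def ind_def\<close>, meson le_less_trans t2C)
    have gm1: "group_mass f (\<lambda>s m. if m \<in> UNIV then 1 - mu s m else 0) m = Tm m - Q m" for m
    proof -
      have fe: "(\<lambda>s. (if m \<in> UNIV then 1 - mu s m else 0) * f s m) = (\<lambda>s. f s m - (if t2$m < s then 1 else 0) * f s m)"
        by (auto simp: fun_eq_iff mu_def ind_def)
      have "group_mass f (\<lambda>s m. if m \<in> UNIV then 1 - mu s m else 0) m
          = (LINT s:{0..1}|lborel. f s m - (if t2$m < s then 1 else 0) * f s m)"
        unfolding group_mass_def fe ..
      also have "\<dots> = Tm m - Q m"
        using set_integral_diff(2)[OF f_int sint_cut[OF f_int]]
        unfolding Tm_def Q_def I_def cutI_def by simp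
      finally show ?thesis .
    qed
    have "total_mass f (\<lambda>s m. if m \<in> UNIV then 1 - mu s m else 0) = Total - min q Total"
      unfolding total_mass_def gm1 by (simp add: sum_subtractf Total_eq sumQ)
    then show "total_mass f mu - total_mass f mu =
      min (q - min q Total) (total_mass f (\<lambda>s m. if m \<in> UNIV then 1 - mu s m else 0))"
      by simp
  qed
  have quota: "quota_outcome f q Q D mu"
    unfolding quota_outcome_def
  proof (rule exI[of _ nu], intro conjI ballI)
    show "nu 0 = (\<lambda>s m. 0)" using e_range by (auto simp: nu_def fun_eq_iff) (metis Suc_n_not_le_n)
    fix k assume k: "k \<in> {1..CARD('m)+1}"
    show "round_step f (eligible (inv D k)) (quota_of Q q (inv D k)) (nu (k - 1)) (nu k)"
    proof (cases "k = CARD('m)+1")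
      case True
      have "inv D k = None" using inv_f_eq[OF D_inj, of None k] True by (simp add: D_def)
      then show ?thesis using True round_R nu_last[of k] nu_last[of "k-1"] sumQ
        by (simp add: eligible_def quota_of_def)
    next
      case False
      then have k1: "1 \<le> k" "k \<le> CARD('m)" using k by auto
      obtain m0 where m0: "e m0 = k" using e_surj k1 by auto
      have em: "e m = k \<longleftrightarrow> m = m0" for m using m0 e_inj by auto
      have invk: "inv D k = Some m0" using inv_f_eq[OF D_inj, of "Some m0" k] m0 by (simp add: D_def)
      have step: "\<forall>s m. nu k s m = (if m \<in> {m0} \<and> t2$m0 < s then 1 else nu (k-1) s m)"
      proof (intro allI)
        fix s m
        show "nu k s m = (if m \<in> {m0} \<and> t2$m0 < s then 1 else nu (k-1) s m)"
        proof (cases "m = m0")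
          case True then show ?thesis using m0 k1 by (simp add: nu_def)
        next
          case False
          then have "e m \<noteq> k" using em by simp
          then have "e m \<le> k \<longleftrightarrow> e m \<le> k-1" by arith
          then show ?thesis using False by (simp add: nu_def)
        qed
      qed
      have avail: "(\<lambda>s m. if m \<in> {m0} then 1 - nu (k-1) s m else 0) = (\<lambda>s m. if m = m0 then 1 else 0)"
        unfolding nu_def fun_eq_iff using m0 k1 by auto
      have gmA: "group_mass f (\<lambda>s m. if m = m0 then 1 else 0) m = (if m = m0 then Tm m else 0)" for m
        by (cases "m = m0") (simp_all add: group_mass_def Tm_def)
      have totA: "total_mass f (\<lambda>s m. if m = m0 then 1 else 0) = Tm m0"
        by (simp add: total_mass_def gmA)
      have diff: "total_mass f (nu k) - total_mass f (nu (k-1)) = Q m0"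
      proof -
        have "(\<Sum>m\<in>UNIV. if e m \<le> k then Q m else 0) =
              (\<Sum>m\<in>UNIV. (if e m \<le> k-1 then Q m else 0) + (if m = m0 then Q m else 0))"
        proof (rule sum.cong[OF refl])
          fix x
          show "(if e x \<le> k then Q x else 0) = (if e x \<le> k-1 then Q x else 0) + (if x = m0 then Q x else 0)"
          proof (cases "x = m0")
            case True then show ?thesis using m0 k1 by simp
          next
            case False
            then have "e x \<noteq> k" using em by simp
            then have "e x \<le> k \<longleftrightarrow> e x \<le> k-1" by arith
            then show ?thesis using False by simp
          qed
        qed
        also have "\<dots> = (\<Sum>m\<in>UNIV. if e m \<le> k-1 then Q m else 0) + Q m0"
          by (simp add: sum.distrib)
        finally show ?thesis unfolding tm_nu by simp
      qed
      have Qle: "Q m0 \<le> Tm m0" unfolding Q_def using Ile t2C by auto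
      show ?thesis unfolding invk eligible_def quota_of_def round_step_def option.case
      proof (intro conjI)
        show "\<exists>t. \<forall>s m. nu k s m = (if m \<in> {m0} \<and> t < s then 1 else nu (k - 1) s m)"
          using step by blast
        show "total_mass f (nu k) - total_mass f (nu (k - 1)) =
          min (Q m0) (total_mass f (\<lambda>s m. if m \<in> {m0} then 1 - nu (k - 1) s m else 0))"
          unfolding avail totA diff using Qle by simp
      qed
    qed
  next
    show "round_step f UNIV (q - total_mass f (nu (CARD('m) + 1))) (nu (CARD('m) + 1)) mu"
      using round_R nu_last[of "CARD('m)+1"] mu_mass by simp
  qed
  show ?thesis
    using prio quota_pol quota opt_mu by blast
qed

end
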